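(* Let $(\Omega,\mathcal{F},\mathbb{P})$ be a probability space, let $N\in\mathbb{N}$, $\alpha\in\mathbb{R}$, $\varepsilon\in(0,1)$, $\delta\in(0,\varepsilon)$, let $X_1,\dots,X_N\colon\Omega\to(0,\infty)$ be random variables, and assume for all $i\in\{1,\dots,N\}$, $x\in(0,\infty)$ that $\mathbb{P}(N^\alpha X_i\le x)=[\tfrac2\pi]^{1/2}\int_0^x\exp(-\tfrac{y^2}{2})\,\mathrm{d}y$. Then $$\mathbb{P}\big(\max\{X_1,\dots,X_N\}\ge N^{-\alpha+\varepsilon}\big)\le(\varepsilon-\delta)^{-1}N^{-\delta}.$$ *)

theory Defs
  imports "HOL-Probability.Probability"
begin

end

theory Submission imports Defs begin

lemma gauss_tail_int:
  fixes x R :: real assumes x: "0 < x" and xR: "x \<le> R"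
  shows "integral {x..R} (\<lambda>y. exp (- (y^2)/2)) \<le> exp (-(x^2)/2) / x"
proof -
  have fi: "((\<lambda>y. y/x * exp (-(y^2)/2)) has_integral ((-exp(-(R^2)/2)/x) - (-exp(-(x^2)/2)/x))) {x..R}"
  proof (rule fundamental_theorem_of_calculus[OF xR])
    fix y assume "y \<in> {x..R}"
    show "((\<lambda>y. -exp(-(y^2)/2)/x) has_vector_derivative (y/x * exp (-(y^2)/2))) (at y within {x..R})"
      unfolding has_real_derivative_iff_has_vector_derivative[symmetric]
      using x by (auto intro!: derivative_eq_intros simp: field_simps power2_eq_square)
  qed
  have "integral {x..R} (\<lambda>y. exp (- (y^2)/2)) \<le> integral {x..R} (\<lambda>y. y/x * exp (-(y^2)/2))"
  proof (rule integral_le)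
    show "(\<lambda>y. exp (- (y^2)/2)) integrable_on {x..R}"
      by (intro integrable_continuous_interval continuous_intros) simp
    show "(\<lambda>y. y/x * exp (-(y^2)/2)) integrable_on {x..R}" using fi by blast
    fix y assume "y \<in> {x..R}"
    then have "1 \<le> y/x" using x by simp
    then show "exp (- (y^2)/2) \<le> y/x * exp (-(y^2)/2)"
      using mult_right_mono[of 1 "y/x" "exp (-(y^2)/2)"] by simp
  qed
  also have "\<dots> = (-exp(-(R^2)/2)/x) - (-exp(-(x^2)/2)/x)" using fi by (rule integral_unique)
  also have "\<dots> \<le> exp (-(x^2)/2) / x" using x by simp
  finally show ?thesis .
qed

lemma aux: fixes A B C s :: real assumes "A + B = C" shows "s*C - s*A = s*B"
  using assms by (auto simp: algebra_simps)

lemma gauss_tail_prob: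
  fixes M :: "'a measure" and Y :: "'a \<Rightarrow> real" and c :: real
  assumes P: "prob_space M" and Ym: "Y \<in> borel_measurable M" and c: "c > 0"
    and F: "\<And>x. x > 0 \<Longrightarrow> measure M {\<omega> \<in> space M. Y \<omega> \<le> x}
            = sqrt (2 / pi) * integral {0..x} (\<lambda>y. exp (- (y ^ 2) / 2))"
  shows "measure M {\<omega> \<in> space M. Y \<omega> \<ge> c} \<le> sqrt (2/pi) * (exp (-(c^2)/2) / c)"
proof -
  interpret prob_space M by (rule P)
  define G where "G x = sqrt (2/pi) * (exp (-(x^2)/2) / x)" for x :: real
  have lim: "(\<lambda>n. measure M {\<omega> \<in> space M. Y \<omega> \<le> real n}) \<longlonglongrightarrow> 1"
  proof -
    have "(\<lambda>n. measure M {\<omega> \<in> space M. Y \<omega> \<le> real n}) \<longlonglongrightarrow> measure M (\<Union>n. {\<omega> \<in> space M. Y \<omega> \<le> real n})"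
      by (rule finite_Lim_measure_incseq) (auto simp: incseq_def intro!: measurable_sets borel_measurable_le Ym)
    also have "(\<Union>n. {\<omega> \<in> space M. Y \<omega> \<le> real n}) = space M"
      by (auto intro: real_arch_simple)
    finally show ?thesis using prob_space by simp
  qed
  have gt: "measure M {\<omega> \<in> space M. Y \<omega> > x} \<le> G x" if x: "x > 0" for x
  proof -
    have A: "{\<omega> \<in> space M. Y \<omega> \<le> x} \<in> sets M" using Ym by measurable
    have "measure M {\<omega> \<in> space M. Y \<omega> > x} = 1 - measure M {\<omega> \<in> space M. Y \<omega> \<le> x}"
    proof -
      have "{\<omega> \<in> space M. Y \<omega> > x} = space M - {\<omega> \<in> space M. Y \<omega> \<le> x}" by auto
      then show ?thesis using prob_compl[OF A] by simp
    qed
    also have "\<dots> \<le> G x"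
    proof (rule LIMSEQ_le_const2[OF tendsto_diff[OF lim tendsto_const]])
      obtain n0 :: nat where n0: "x \<le> real n0" using real_arch_simple by blast
      show "\<exists>N. \<forall>n\<ge>N. measure M {\<omega> \<in> space M. Y \<omega> \<le> real n} - measure M {\<omega> \<in> space M. Y \<omega> \<le> x} \<le> G x"
      proof (intro exI allI impI)
        fix n assume "n0 \<le> n"
        then have xn: "x \<le> real n" using n0 by linarith
        have c1: "integral {0..x} (\<lambda>y. exp (- (y ^ 2) / 2)) + integral {x..real n} (\<lambda>y. exp (- (y ^ 2) / 2))
            = integral {0..real n} (\<lambda>y. exp (- (y ^ 2) / 2))"
          by (rule Henstock_Kurzweil_Integration.integral_combine) (use x xn in \<open>auto intro!: integrable_continuous_interval continuous_intros\<close>)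
        have c2: "integral {x..real n} (\<lambda>y. exp (- (y ^ 2) / 2)) \<le> exp (-(x^2)/2) / x"
          by (rule gauss_tail_int[OF x xn])
        show "measure M {\<omega> \<in> space M. Y \<omega> \<le> real n} - measure M {\<omega> \<in> space M. Y \<omega> \<le> x} \<le> G x"
        proof -
          have Fn: "measure M {\<omega> \<in> space M. Y \<omega> \<le> real n} = sqrt (2 / pi) * integral {0..real n} (\<lambda>y. exp (- (y ^ 2) / 2))"
            using F[of "real n"] x xn by simp
          have "measure M {\<omega> \<in> space M. Y \<omega> \<le> real n} - measure M {\<omega> \<in> space M. Y \<omega> \<le> x}
             = sqrt (2/pi) * integral {x..real n} (\<lambda>y. exp (- (y ^ 2) / 2))"
            unfolding F[OF x] Fn by (rule aux[OF c1])
          also have "\<dots> \<le> sqrt (2/pi) * (exp (-(x^2)/2) / x)"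
            by (rule mult_left_mono[OF c2]) simp
          finally show ?thesis unfolding G_def .
        qed
      qed
    qed
    finally show ?thesis .
  qed
  have "measure M {\<omega> \<in> space M. Y \<omega> \<ge> c} \<le> G c"
  proof (rule tendsto_le[of "at_left c" G])
    show "at_left c \<noteq> bot" by simp
    show "(G \<longlongrightarrow> G c) (at_left c)" unfolding G_def using c
      by (intro tendsto_intros) auto
    show "((\<lambda>_. measure M {\<omega> \<in> space M. Y \<omega> \<ge> c}) \<longlongrightarrow> measure M {\<omega> \<in> space M. Y \<omega> \<ge> c}) (at_left c)"
      by simp
    show "\<forall>\<^sub>F x in at_left c. measure M {\<omega> \<in> space M. Y \<omega> \<ge> c} \<le> G x"
      unfolding eventually_at_left_field
    proof (intro exI[of _ 0] conjI allI impI)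
      fix x assume "0 < x" "x < c"
      have "measure M {\<omega> \<in> space M. Y \<omega> \<ge> c} \<le> measure M {\<omega> \<in> space M. Y \<omega> > x}"
      proof (rule finite_measure_mono)
        show "{\<omega> \<in> space M. Y \<omega> \<ge> c} \<subseteq> {\<omega> \<in> space M. Y \<omega> > x}" using \<open>x < c\<close> by auto
        show "{\<omega> \<in> space M. Y \<omega> > x} \<in> sets M" using Ym by measurable
      qed
      then show "measure M {\<omega> \<in> space M. Y \<omega> \<ge> c} \<le> G x" using gt[OF \<open>0 < x\<close>] by linarith
    qed (use c in auto)
  qed
  then show ?thesis by (simp add: G_def)
qed

lemma ln_half: fixes c :: real assumes "c > 0" shows "ln c \<le> c / 2"
proof -
  have s: "sqrt c > 0" using assms by simp
  have "ln c = 2 * ln (sqrt c)" using assms by (simp add: ln_sqrt)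
  also have "\<dots> \<le> 2 * (sqrt c - 1)" using ln_le_minus_one[OF s] by simp
  also have "\<dots> \<le> c / 2"
  proof -
    have "0 \<le> (sqrt c - 2)^2" by simp
    also have "\<dots> = c - 4 * sqrt c + 4" using assms by (simp add: power2_eq_square algebra_simps)
    finally show ?thesis by simp
  qed
  finally show ?thesis .
qed

lemma real_ineq:
  fixes n p B \<epsilon> \<delta> :: real
  assumes n: "n \<ge> 1" and e: "0 < \<delta>" "\<delta> < \<epsilon>" "\<epsilon> < 1"
    and B: "B \<le> exp (-((n powr \<epsilon>)^2)/2) / (n powr \<epsilon>)"
    and p1: "p \<le> 1" and pB: "p \<le> n * B"
  shows "p \<le> inverse (\<epsilon> - \<delta>) * n powr (- \<delta>)"
proof (cases "n powr \<delta> * (\<epsilon> - \<delta>) \<le> 1")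
  case True
  have pos: "n powr \<delta> * (\<epsilon> - \<delta>) > 0" using n e by simp
  have "inverse (\<epsilon> - \<delta>) * n powr (- \<delta>) = inverse (n powr \<delta> * (\<epsilon> - \<delta>))"
    using n by (simp add: powr_minus)
  also have "\<dots> \<ge> 1" using one_le_inverse[OF pos True] .
  finally show ?thesis using p1 by linarith
next
  case False
  define t where "t = ln n"
  have t0: "t \<ge> 0" using n by (simp add: t_def)
  have pw: "n powr a = exp (a * t)" for a using n by (simp add: powr_def t_def)
  define c where "c = exp (\<epsilon> * t)"
  have c0: "c > 0" by (simp add: c_def)
  have "exp (\<delta> * t) * (\<epsilon> - \<delta>) > 1" using False by (simp add: pw)
  then have "exp (\<delta> * t) * \<epsilon> > 1"
  proof -
    have "exp (\<delta> * t) * (\<epsilon> - \<delta>) \<le> exp (\<delta> * t) * \<epsilon>"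
      by (rule mult_left_mono) (use e in auto)
    then show ?thesis using \<open>exp (\<delta> * t) * (\<epsilon> - \<delta>) > 1\<close> by linarith
  qed
  moreover have "exp (\<delta> * t) \<le> c" unfolding c_def using e t0 by (simp add: mult_right_mono)
  ultimately have ec: "\<epsilon> * c > 1"
  proof -
    assume a1: "exp (\<delta> * t) * \<epsilon> > 1" and a2: "exp (\<delta> * t) \<le> c"
    have "\<epsilon> * exp (\<delta> * t) \<le> \<epsilon> * c" by (rule mult_left_mono[OF a2]) (use e in auto)
    then show ?thesis using a1 by (simp add: mult.commute)
  qed
  have "\<epsilon> * t = ln c" by (simp add: c_def)
  also have "\<dots> \<le> c / 2" by (rule ln_half[OF c0])
  finally have "\<epsilon> * t \<le> c / 2" .
  moreover have "c \<le> \<epsilon> * c * c" using ec c0 mult_right_mono[of 1 "\<epsilon> * c" c] by simp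
  ultimately have "\<epsilon> * t \<le> \<epsilon> * c * c / 2" by simp
  then have tc: "t \<le> c * c / 2" using e by (simp add: mult.assoc)
  have key: "t - c^2/2 - \<epsilon> * t \<le> - \<delta> * t"
  proof -
    have "(1 + \<delta> - \<epsilon>) * t \<le> t" using e t0 by (simp add: mult_left_le_one_le)
    then show ?thesis using tc by (simp add: power2_eq_square algebra_simps)
  qed
  have "n * B \<le> exp t * (exp (-(c^2)/2) / c)"
  proof -
    have B2: "B \<le> exp (-(c^2)/2) / c" using B by (simp add: pw c_def)
    have "exp t = n" using n by (simp add: t_def)
    then show ?thesis using mult_left_mono[OF B2, of n] n by simp
  qed
  also have "\<dots> = exp (t - c^2/2 - \<epsilon> * t)"
  proof -
    have ce: "exp (\<epsilon> * t) = c" by (simp add: c_def)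
    have "exp (t - c^2/2 - \<epsilon> * t) = exp t / exp (c^2/2) / c" unfolding exp_diff ce ..
    also have "\<dots> = exp t * (exp (-(c^2)/2) / c)"
    proof -
      have e: "exp (-(c^2)/2) = inverse (exp (c^2/2))" by (simp add: exp_minus[symmetric])
      have "exp t / exp (c^2/2) / c = exp t * (inverse (exp (c^2/2)) / c)"
        by (simp only: divide_inverse mult.assoc)
      then show ?thesis unfolding e .
    qed
    finally show ?thesis by simp
  qed
  also have "\<dots> \<le> exp (- \<delta> * t)" using key by simp
  also have "\<dots> \<le> inverse (\<epsilon> - \<delta>) * exp (- \<delta> * t)"
  proof -
    have "1 \<le> inverse (\<epsilon> - \<delta>)" using e by (simp add: one_le_inverse)
    then show ?thesis using mult_right_mono[of 1 "inverse (\<epsilon> - \<delta>)" "exp (- \<delta> * t)"] by simp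
  qed
  also have "\<dots> = inverse (\<epsilon> - \<delta>) * n powr (- \<delta>)" by (simp add: pw)
  finally show ?thesis using pB by linarith
qed

theorem lemma2p34:
  fixes M :: "'a measure" and N :: nat and \<alpha> \<epsilon> \<delta> :: real
    and X :: "nat \<Rightarrow> 'a \<Rightarrow> real"
  assumes "prob_space M"
    and "N \<ge> 1"
    and "0 < \<epsilon>" and "\<epsilon> < 1"
    and "0 < \<delta>" and "\<delta> < \<epsilon>"
    and "\<And>i. i \<in> {1..N} \<Longrightarrow> X i \<in> borel_measurable M"
    and "\<And>i \<omega>. i \<in> {1..N} \<Longrightarrow> \<omega> \<in> space M \<Longrightarrow> X i \<omega> > 0"
    and "\<And>i x. i \<in> {1..N} \<Longrightarrow> x > 0 \<Longrightarrow>
          measure M {\<omega> \<in> space M. real N powr \<alpha> * X i \<omega> \<le> x}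
            = sqrt (2 / pi) * integral {0..x} (\<lambda>y. exp (- (y ^ 2) / 2))"
  shows "measure M {\<omega> \<in> space M. Max ((\<lambda>i. X i \<omega>) ` {1..N}) \<ge> real N powr (- \<alpha> + \<epsilon>)}
           \<le> inverse (\<epsilon> - \<delta>) * real N powr (- \<delta>)"
proof -
  interpret prob_space M by (rule assms(1))
  define t where "t = real N powr (- \<alpha> + \<epsilon>)"
  define c where "c = real N powr \<epsilon>"
  define B where "B = sqrt (2/pi) * (exp (-(c^2)/2) / c)"
  have N0: "real N > 0" using assms(2) by simp
  have c0: "c > 0" using N0 by (simp add: c_def)
  have tc: "real N powr \<alpha> * t = c" unfolding t_def c_def using N0
    by (simp add: powr_add[symmetric])
  have Na: "real N powr \<alpha> > 0" using N0 by simp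
  have S: "{\<omega> \<in> space M. Max ((\<lambda>i. X i \<omega>) ` {1..N}) \<ge> t} = (\<Union>i\<in>{1..N}. {\<omega> \<in> space M. X i \<omega> \<ge> t})"
    using assms(2) by (auto simp: Max_ge_iff)
  have each: "measure M {\<omega> \<in> space M. X i \<omega> \<ge> t} \<le> B" if i: "i \<in> {1..N}" for i
  proof -
    have eq: "{\<omega> \<in> space M. X i \<omega> \<ge> t} = {\<omega> \<in> space M. real N powr \<alpha> * X i \<omega> \<ge> c}"
      using Na by (auto simp flip: tc)
    show ?thesis unfolding eq B_def
      by (rule gauss_tail_prob[OF assms(1) _ c0 assms(9)[OF i]]) (use assms(7)[OF i] in auto)
  qed
  have "measure M (\<Union>i\<in>{1..N}. {\<omega> \<in> space M. X i \<omega> \<ge> t}) \<le> (\<Sum>i\<in>{1..N}. measure M {\<omega> \<in> space M. X i \<omega> \<ge> t})"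
  proof (rule finite_measure_subadditive_finite)
    show "(\<lambda>i. {\<omega> \<in> space M. X i \<omega> \<ge> t}) ` {1..N} \<subseteq> sets M"
    proof safe
      fix i assume "i \<in> {1..N}"
      then show "{\<omega> \<in> space M. X i \<omega> \<ge> t} \<in> sets M" using assms(7) by measurable
    qed
  qed simp
  also have "\<dots> \<le> (\<Sum>i\<in>{1..N}. B)" by (rule sum_mono[OF each])
  also have "\<dots> = real N * B" by simp
  finally have pB: "measure M {\<omega> \<in> space M. Max ((\<lambda>i. X i \<omega>) ` {1..N}) \<ge> t} \<le> real N * B"
    unfolding S .
  have B': "B \<le> exp (-((real N powr \<epsilon>)^2)/2) / (real N powr \<epsilon>)"
  proof -
    have "sqrt (2/pi) \<le> 1" using pi_gt3 by (simp add: real_sqrt_le_1_iff)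
    then show ?thesis unfolding B_def c_def
      using mult_right_mono[of "sqrt (2/pi)" 1 "exp (-((real N powr \<epsilon>)^2)/2) / (real N powr \<epsilon>)"] N0 by simp
  qed
  show ?thesis unfolding t_def[symmetric]
    by (rule real_ineq[OF _ assms(5,6,4) B' prob_le_1 pB]) (use assms(2) in simp)
qed

end
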